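(* Let $k$ be a field of characteristic $p>0$, $P$ a finite poset, $R=\mathcal{R}_k[J(P)]$ the Hibi ring and $\mathfrak{m}=R_+$. Then for all sufficiently large $Q=p^e$ and every integer $r\ge(\operatorname{rank}^*P+2)(Q-1)+1$, we have $\mathfrak{m}^r\subseteq\mathfrak{m}^{[Q]}$.
   Context: Let $P=\{p_1,\dots,p_N\}$ be a finite poset and $J(P)$ the set of poset ideals of $P$ (down-closed subsets, including $\emptyset$ and $P$). The Hibi ring is $\mathcal{R}_k[J(P)]=k[\,T\prod_{p_i\in I}X_i\mid I\in J(P)\,]\subseteq k[T,X_1,\dots,X_N]$, each generator in degree $1$; $\mathfrak{m}=R_+$ is generated by these generators; $\mathfrak{m}^{[Q]}=(x^Q\mid x\in\mathfrak{m})$. $x\lessdot y$ means $x<y$ with no $z$ satisfying $x<z<y$. A path is a sequence $C=(q_1,\dots,q_t)$ of distinct elements of $P$ with $q_1$ minimal in $P$, consecutive elements related by $q_i\lessdot q_{i+1}$ or $q_{i+1}\lessdot q_i$, and $q_{t-1}\lessdot q_t$ (when $t\ge2$); it is maximal if $q_t$ is maximal in $P$. For $1<i<t$, $q_i$ is locally maximal if $q_{i-1}\lessdot q_i$ and $q_{i+1}\lessdot q_i$, locally minimal if $q_i\lessdot q_{i-1}$ and $q_i\lessdot q_{i+1}$; $q_1$ counts as locally minimal and $q_t$ as locally maximal. The decomposition $C=A_1+D_1+\cdots+D_{n-1}+A_n$ splits $C$ into consecutive blocks: $A_1$ is $q_1$ through the first locally maximal element, $D_1$ the following elements through the next locally minimal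 element, $A_2$ the following elements through the next locally maximal element, etc., $A_n$ ending at $q_t$; $t(A_i)$ is the last element of $A_i$, $V(\cdot)$ the set of elements of a block, $\langle A\rangle=\{q\in P\mid q\le t(A)\}$, and $\langle A_i\setminus t(A_i)\rangle$ the poset ideal generated by the elements of $A_i$ other than $t(A_i)$. $C$ satisfies ( * ) if for all $1\le i\le n-1$: (1) $V(D_i)\cap(\bigcup_{m=1}^{i-1}\langle A_m\rangle\cup\langle A_i\setminus t(A_i)\rangle\cup\{t(A_i)\})=\emptyset$; (2) $V(A_{i+1})\cap\bigcup_{m=1}^{i}\langle A_m\rangle=\emptyset$. $\operatorname{len}^*C=\#\{i\mid q_i\lessdot q_{i+1}\}$, and $\operatorname{rank}^*P$ is the maximum of $\operatorname{len}^*C$ over maximal paths $C$ satisfying ( * ). *)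

theory Defs
  imports Main "HOL-Library.Poly_Mapping"
begin

text \<open>Polynomials over 'k in the variables indexed by 'a option:
  None is the variable T, Some p is the variable X_p.\<close>

type_synonym ('a, 'k) mpoly = "('a option \<Rightarrow>\<^sub>0 nat) \<Rightarrow>\<^sub>0 'k"

definition poset_ideals :: "'a::order set \<Rightarrow> 'a set set" where
  "poset_ideals P = {I. I \<subseteq> P \<and> (\<forall>x\<in>I. \<forall>y\<in>P. y \<le> x \<longrightarrow> y \<in> I)}"

definition hibi_gen :: "'a set \<Rightarrow> ('a, 'k::comm_ring_1) mpoly" where
  "hibi_gen I = Poly_Mapping.single
     (Poly_Mapping.single None 1 + (\<Sum>x\<in>I. Poly_Mapping.single (Some x) 1)) 1"

inductive_set hibi_ring :: "'a::order set \<Rightarrow> ('a, 'k::field) mpoly set" for P where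
  const: "Poly_Mapping.single 0 c \<in> hibi_ring P"
| gen: "I \<in> poset_ideals P \<Longrightarrow> hibi_gen I \<in> hibi_ring P"
| add: "f \<in> hibi_ring P \<Longrightarrow> g \<in> hibi_ring P \<Longrightarrow> f + g \<in> hibi_ring P"
| mult: "f \<in> hibi_ring P \<Longrightarrow> g \<in> hibi_ring P \<Longrightarrow> f * g \<in> hibi_ring P"

definition hibi_max :: "'a::order set \<Rightarrow> ('a, 'k::field) mpoly set" where
  "hibi_max P = {f \<in> hibi_ring P. Poly_Mapping.lookup f 0 = 0}"

inductive_set ideal_span :: "'r::comm_ring_1 set \<Rightarrow> 'r set \<Rightarrow> 'r set" for R S where
  zero: "0 \<in> ideal_span R S"
| smult: "r \<in> R \<Longrightarrow> s \<in> S \<Longrightarrow> r * s \<in> ideal_span R S"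
| add: "a \<in> ideal_span R S \<Longrightarrow> b \<in> ideal_span R S \<Longrightarrow> a + b \<in> ideal_span R S"

definition ideal_pow :: "'r::comm_ring_1 set \<Rightarrow> 'r set \<Rightarrow> nat \<Rightarrow> 'r set" where
  "ideal_pow R M r = ideal_span R {prod_list xs | xs. length xs = r \<and> set xs \<subseteq> M}"

definition frob_pow :: "'r::comm_ring_1 set \<Rightarrow> 'r set \<Rightarrow> nat \<Rightarrow> 'r set" where
  "frob_pow R M Q = ideal_span R {x ^ Q | x. x \<in> M}"

definition covby :: "'a::order set \<Rightarrow> 'a \<Rightarrow> 'a \<Rightarrow> bool" where
  "covby P x y \<longleftrightarrow> x \<in> P \<and> y \<in> P \<and> x < y \<and> \<not> (\<exists>z\<in>P. x < z \<and> z < y)"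

text \<open>Paths are lists q = [q_1, ..., q_t] (0-indexed in Isabelle).\<close>
definition is_path :: "'a::order set \<Rightarrow> 'a list \<Rightarrow> bool" where
  "is_path P q \<longleftrightarrow> q \<noteq> [] \<and> distinct q \<and> set q \<subseteq> P
     \<and> (\<forall>y\<in>P. \<not> y < q ! 0)
     \<and> (\<forall>i. Suc i < length q \<longrightarrow> covby P (q ! i) (q ! Suc i) \<or> covby P (q ! Suc i) (q ! i))
     \<and> (length q \<ge> 2 \<longrightarrow> covby P (q ! (length q - 2)) (q ! (length q - 1)))"

definition is_maximal_path :: "'a::order set \<Rightarrow> 'a list \<Rightarrow> bool" where
  "is_maximal_path P q \<longleftrightarrow> is_path P q \<and> (\<forall>y\<in>P. \<not> last q < y)"

definition loc_max_idx :: "'a::order set \<Rightarrow> 'a list \<Rightarrow> nat set" where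
  "loc_max_idx P q = {i. i < length q \<and> (i = length q - 1 \<or>
     (0 < i \<and> covby P (q ! (i - 1)) (q ! i) \<and> covby P (q ! Suc i) (q ! i)))}"

definition loc_min_idx :: "'a::order set \<Rightarrow> 'a list \<Rightarrow> nat set" where
  "loc_min_idx P q = {i. i < length q \<and> (i = 0 \<or>
     (Suc i < length q \<and> covby P (q ! i) (q ! (i - 1)) \<and> covby P (q ! i) (q ! Suc i)))}"

text \<open>Number n of ascending blocks A_1, ..., A_n.\<close>
definition nblocks :: "'a::order set \<Rightarrow> 'a list \<Rightarrow> nat" where
  "nblocks P q = card (loc_max_idx P q)"

text \<open>Index of t(A_i), i.e. the i-th locally maximal element (i = 1..n).\<close>
definition a_end :: "'a::order set \<Rightarrow> 'a list \<Rightarrow> nat \<Rightarrow> nat" where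
  "a_end P q i = sorted_list_of_set (loc_max_idx P q) ! (i - 1)"

text \<open>Index of the last element of D_i, i.e. the (i+1)-th locally minimal element
  (the 1st being q_1), i = 1..n-1.\<close>
definition d_end :: "'a::order set \<Rightarrow> 'a list \<Rightarrow> nat \<Rightarrow> nat" where
  "d_end P q i = sorted_list_of_set (loc_min_idx P q) ! i"

definition VA :: "'a::order set \<Rightarrow> 'a list \<Rightarrow> nat \<Rightarrow> 'a set" where
  "VA P q i = {q ! j | j. (if i = 1 then 0 \<le> j else d_end P q (i - 1) < j) \<and> j \<le> a_end P q i}"

definition VD :: "'a::order set \<Rightarrow> 'a list \<Rightarrow> nat \<Rightarrow> 'a set" where
  "VD P q i = {q ! j | j. a_end P q i < j \<and> j \<le> d_end P q i}"

definition tA :: "'a::order set \<Rightarrow> 'a list \<Rightarrow> nat \<Rightarrow> 'a" where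
  "tA P q i = q ! a_end P q i"

text \<open>The poset ideal \<langle>A_i\<rangle> = {x in P. x \<le> t(A_i)}.\<close>
definition genA :: "'a::order set \<Rightarrow> 'a list \<Rightarrow> nat \<Rightarrow> 'a set" where
  "genA P q i = {x \<in> P. x \<le> tA P q i}"

definition genA_minus :: "'a::order set \<Rightarrow> 'a list \<Rightarrow> nat \<Rightarrow> 'a set" where
  "genA_minus P q i = {x \<in> P. \<exists>y \<in> VA P q i - {tA P q i}. x \<le> y}"

definition star_cond :: "'a::order set \<Rightarrow> 'a list \<Rightarrow> bool" where
  "star_cond P q \<longleftrightarrow> (\<forall>i. 1 \<le> i \<and> i \<le> nblocks P q - 1 \<longrightarrow>
     VD P q i \<inter> ((\<Union>m\<in>{1..<i}. genA P q m) \<union> genA_minus P q i \<union> {tA P q i}) = {}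
     \<and> VA P q (Suc i) \<inter> (\<Union>m\<in>{1..i}. genA P q m) = {})"

definition len_star :: "'a::order set \<Rightarrow> 'a list \<Rightarrow> nat" where
  "len_star P q = card {i. Suc i < length q \<and> covby P (q ! i) (q ! Suc i)}"

definition rank_star :: "'a::order set \<Rightarrow> nat" where
  "rank_star P = Max {len_star P q | q. is_maximal_path P q \<and> star_cond P q}"

end

theory Submission
  imports Defs
begin


lemma covby_not_sym: "covby P a b \<Longrightarrow> \<not> covby P b a"
  unfolding covby_def by auto

lemma cover_below:
  assumes "finite P" "x \<in> P" "z \<in> P" "x < z"
  shows "\<exists>y\<in>P. x \<le> y \<and> covby P y z"
proof -
  let ?S = "{y\<in>P. x \<le> y \<and> y < z}"
  have "finite ?S" "?S \<noteq> {}" using assms by auto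
  then obtain y where y: "y \<in> ?S" "\<forall>b\<in>?S. y \<le> b \<longrightarrow> y = b"
    using finite_has_maximal by blast
  have "covby P y z" unfolding covby_def
  proof (intro conjI)
    show "\<not> (\<exists>w\<in>P. y < w \<and> w < z)"
    proof
      assume "\<exists>w\<in>P. y < w \<and> w < z"
      then obtain w where "w \<in> P" "y < w" "w < z" by blast
      with y show False by (metis (mono_tags, lifting) dual_order.strict_trans2 mem_Collect_eq
          nless_le order.strict_implies_order)
    qed
  qed (use y assms in auto)
  thus ?thesis using y by auto
qed

lemma cover_above:
  assumes "finite P" "x \<in> P" "z \<in> P" "x < z"
  shows "\<exists>y\<in>P. covby P x y \<and> y \<le> z"
proof -
  let ?S = "{y\<in>P. x < y \<and> y \<le> z}"
  have "finite ?S" "?S \<noteq> {}" using assms by auto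
  then obtain y where y: "y \<in> ?S" "\<forall>b\<in>?S. b \<le> y \<longrightarrow> y = b"
    using finite_has_minimal by blast
  have "covby P x y" unfolding covby_def
  proof (intro conjI)
    show "\<not> (\<exists>w\<in>P. x < w \<and> w < y)"
    proof
      assume "\<exists>w\<in>P. x < w \<and> w < y"
      then obtain w where "w \<in> P" "x < w" "w < y" by blast
      with y show False by (metis (mono_tags, lifting) dual_order.strict_trans2 mem_Collect_eq
          nless_le order.strict_implies_order)
    qed
  qed (use y assms in auto)
  thus ?thesis using y by auto
qed

locale comb =
  fixes P :: "'a::order set" and c :: "'a \<Rightarrow> nat" and s Q :: nat
  assumes finP: "finite P"
    and crev: "\<And>x y. x \<in> P \<Longrightarrow> y \<in> P \<Longrightarrow> x \<le> y \<Longrightarrow> c y \<le> c x"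
    and Qpos: "1 \<le> Q"
begin

primrec X :: "nat \<Rightarrow> 'a set" where
  "X 0 = {x\<in>P. s - Q < c x}"
| "X (Suc n) = {y\<in>P. \<exists>z. y \<le> z \<and> (z \<in> X n \<or> (z \<in> P \<and> (\<exists>p\<in>X n. covby P p z \<and> c p < c z + Q)))}"

definition lev :: "'a \<Rightarrow> nat" where "lev x = (LEAST n. x \<in> X n)"

definition R :: "'a set" where "R = (\<Union>n. X n)"

lemma X_sub: "X n \<subseteq> P"
  by (cases n) auto

lemma X_down: "x \<in> X n \<Longrightarrow> y \<in> P \<Longrightarrow> y \<le> x \<Longrightarrow> y \<in> X n"
proof (cases n)
  case 0
  assume "x \<in> X n" "y \<in> P" "y \<le> x"
  with 0 show ?thesis using crev[of y x] by auto
next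
  case (Suc m)
  assume "x \<in> X n" "y \<in> P" "y \<le> x"
  with Suc show ?thesis by (auto intro: order_trans)
qed

lemma X_mono1: "X n \<subseteq> X (Suc n)"
  using X_sub by auto

lemma X_mono: "m \<le> n \<Longrightarrow> X m \<subseteq> X n"
  by (induction n) (auto simp: le_Suc_eq dest: X_mono1[THEN subsetD])

lemma X_up:
  assumes "p \<in> X n" "covby P p z" "c p < c z + Q" shows "z \<in> X (Suc n)"
proof -
  have zP: "z \<in> P" using assms(2) by (simp add: covby_def)
  have "\<exists>za. z \<le> za \<and> (za \<in> X n \<or> (za \<in> P \<and> (\<exists>p\<in>X n. covby P p za \<and> c p < c za + Q)))"
    by (rule exI[of _ z]) (use assms zP in auto)
  thus ?thesis using zP by simp
qed

lemma X_bound: "x \<in> X n \<Longrightarrow> s < c x + Q + (Q - 1) * n"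
proof (induction n arbitrary: x)
  case 0 thus ?case by auto
next
  case (Suc n)
  then obtain z where z: "x \<le> z" "z \<in> X n \<or> (z \<in> P \<and> (\<exists>p\<in>X n. covby P p z \<and> c p < c z + Q))"
    and xP: "x \<in> P" by auto
  show ?case
  proof (cases "z \<in> X n")
    case True
    have "c z \<le> c x" using crev[of x z] z xP True X_sub by auto
    moreover have "(Q-1)*Suc n = (Q-1)*n + (Q-1)" by simp
    ultimately show ?thesis using Suc.IH[OF True] by linarith
  next
    case False
    with z obtain p where p: "z \<in> P" "p \<in> X n" "c p < c z + Q" by auto
    have "c z \<le> c x" using crev[of x z] z xP p by auto
    moreover have "(Q-1)*Suc n = (Q-1)*n + (Q-1)" by simp
    ultimately show ?thesis using Suc.IH[OF p(2)] p(3) Qpos by linarith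
  qed
qed

lemma lev_in: "x \<in> X n \<Longrightarrow> x \<in> X (lev x) \<and> lev x \<le> n"
  unfolding lev_def by (metis LeastI Least_le)

lemma lev_mono: "x \<in> X n \<Longrightarrow> y \<in> P \<Longrightarrow> y \<le> x \<Longrightarrow> lev y \<le> lev x"
  by (meson X_down lev_in)

lemma lev_eq: "x \<in> X (Suc n) \<Longrightarrow> x \<notin> X n \<Longrightarrow> lev x = Suc n"
  by (metis X_mono lev_in le_antisym not_less_eq_eq subsetD)

lemma lev0: "x \<in> X 0 \<Longrightarrow> lev x = 0"
  using lev_in by blast

end



context comb begin

lemma R_sub: "R \<subseteq> P" using X_sub unfolding R_def by auto

lemma R_up_aux:
  "card {w\<in>P. x < w \<and> w \<le> y} = N \<Longrightarrow> x \<in> R \<Longrightarrow> y \<in> P \<Longrightarrow> x \<le> y \<Longrightarrow> c x < c y + Q \<Longrightarrow> y \<in> R"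
proof (induction N arbitrary: x rule: less_induct)
  case (less N)
  show ?case
  proof (cases "x = y")
    case True thus ?thesis using less by simp
  next
    case False
    hence xy: "x < y" using less by auto
    have xP: "x \<in> P" using less R_sub by auto
    obtain w where w: "w \<in> P" "covby P x w" "w \<le> y"
      using cover_above[OF finP xP less(4) xy] by blast
    have xw: "x < w" using w by (simp add: covby_def)
    have cwy: "c y \<le> c w" using crev[OF w(1) less(4) w(3)] .
    have cxw: "c w \<le> c x" using crev[OF xP w(1)] xw by simp
    obtain n where "x \<in> X n" using less(3) unfolding R_def by auto
    hence "w \<in> X (Suc n)" using X_up[OF _ w(2)] cwy less(6) by simp
    hence wR: "w \<in> R" unfolding R_def by (rule UN_I[OF UNIV_I])
    have sub: "{v\<in>P. w < v \<and> v \<le> y} \<subset> {v\<in>P. x < v \<and> v \<le> y}"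
      using xw w by (auto intro: less_trans)
    have "card {v\<in>P. w < v \<and> v \<le> y} < N"
      using psubset_card_mono[OF _ sub] finP less(2) by auto
    from less(1)[OF this refl wR less(4) w(3)] show ?thesis using cxw less(6) by linarith
  qed
qed

lemma R_up: "x \<in> R \<Longrightarrow> y \<in> P \<Longrightarrow> x \<le> y \<Longrightarrow> c x < c y + Q \<Longrightarrow> y \<in> R"
  using R_up_aux by blast

definition good :: "'a list \<Rightarrow> nat \<Rightarrow> bool" where
  "good q pe \<longleftrightarrow> q \<noteq> [] \<and> pe < length q \<and> set q \<subseteq> R \<and> (\<forall>y\<in>P. \<not> y < q!0)
    \<and> (\<forall>j\<le>pe. q!j \<in> X 0)
    \<and> (\<forall>j. Suc j < length q \<longrightarrow> (j < pe \<longrightarrow> covby P (q!j) (q!Suc j))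
        \<and> (pe \<le> j \<longrightarrow> (covby P (q!j) (q!Suc j) \<and> lev (q!Suc j) = Suc (lev (q!j)))
                     \<or> (j \<noteq> pe \<and> covby P (q!Suc j) (q!j) \<and> lev (q!Suc j) = lev (q!j))))"

lemma nth_snoc_cases: "j < Suc (length q) \<Longrightarrow> (q@[y])!j = (if j < length q then q!j else y)"
  by (simp add: nth_append)

lemma good_snoc_up:
  assumes g: "good q pe" and yR: "y \<in> R" and cv: "covby P (last q) y"
    and lv: "lev y = Suc (lev (last q))"
  shows "good (q@[y]) pe"
proof -
  have ne: "q \<noteq> []" and pe: "pe < length q" using g by (auto simp: good_def)
  have lastq: "last q = q ! (length q - 1)" using ne by (simp add: last_conv_nth)
  show ?thesis unfolding good_def
  proof (intro conjI allI impI)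
    fix j assume j: "Suc j < length (q@[y])"
    show "j < pe \<Longrightarrow> covby P ((q @ [y]) ! j) ((q @ [y]) ! Suc j)"
      using g j pe unfolding good_def by (auto simp: nth_append)
    show "pe \<le> j \<Longrightarrow> covby P ((q @ [y]) ! j) ((q @ [y]) ! Suc j) \<and> lev ((q @ [y]) ! Suc j) = Suc (lev ((q @ [y]) ! j)) \<or>
     j \<noteq> pe \<and> covby P ((q @ [y]) ! Suc j) ((q @ [y]) ! j) \<and> lev ((q @ [y]) ! Suc j) = lev ((q @ [y]) ! j)"
    proof (cases "Suc j < length q")
      case True
      thus "pe \<le> j \<Longrightarrow> ?thesis" using g unfolding good_def by (auto simp: nth_append)
    next
      case False
      hence "j = length q - 1" using j by simp
      thus ?thesis using cv lv lastq ne by (simp add: nth_append)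
    qed
  qed (use g yR ne pe in \<open>auto simp: good_def nth_append\<close>)
qed

lemma good_snoc_down:
  assumes g: "good q pe" and yR: "y \<in> R" and cv: "covby P y (last q)"
    and lv: "lev y = lev (last q)" and pe': "pe < length q - 1"
  shows "good (q@[y]) pe"
proof -
  have ne: "q \<noteq> []" and pe: "pe < length q" using g by (auto simp: good_def)
  have lastq: "last q = q ! (length q - 1)" using ne by (simp add: last_conv_nth)
  show ?thesis unfolding good_def
  proof (intro conjI allI impI)
    fix j assume j: "Suc j < length (q@[y])"
    show "j < pe \<Longrightarrow> covby P ((q @ [y]) ! j) ((q @ [y]) ! Suc j)"
      using g j pe unfolding good_def by (auto simp: nth_append)
    show "pe \<le> j \<Longrightarrow> covby P ((q @ [y]) ! j) ((q @ [y]) ! Suc j) \<and> lev ((q @ [y]) ! Suc j) = Suc (lev ((q @ [y]) ! j)) \<or>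
     j \<noteq> pe \<and> covby P ((q @ [y]) ! Suc j) ((q @ [y]) ! j) \<and> lev ((q @ [y]) ! Suc j) = lev ((q @ [y]) ! j)"
    proof (cases "Suc j < length q")
      case True
      thus "pe \<le> j \<Longrightarrow> ?thesis" using g unfolding good_def by (auto simp: nth_append)
    next
      case False
      hence "j = length q - 1" using j by simp
      thus ?thesis using cv lv lastq ne pe' by (simp add: nth_append)
    qed
  qed (use g yR ne pe in \<open>auto simp: good_def nth_append\<close>)
qed

lemma good_snoc_pre:
  assumes g: "good q (length q - 1)" and y0: "y \<in> X 0" and cv: "covby P (last q) y"
  shows "good (q@[y]) (length q)"
proof -
  have ne: "q \<noteq> []" using g by (auto simp: good_def)
  have lastq: "last q = q ! (length q - 1)" using ne by (simp add: last_conv_nth)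
  have yR: "y \<in> R" unfolding R_def using y0 by (intro UN_I[OF UNIV_I])
  show ?thesis unfolding good_def
  proof (intro conjI allI impI)
    fix j assume j: "Suc j < length (q@[y])"
    show "j < length q \<Longrightarrow> covby P ((q @ [y]) ! j) ((q @ [y]) ! Suc j)"
    proof (cases "Suc j < length q")
      case True
      thus "j < length q \<Longrightarrow> ?thesis" using g unfolding good_def by (auto simp: nth_append)
    next
      case False
      hence "j = length q - 1" using j by simp
      thus ?thesis using cv lastq ne by (simp add: nth_append)
    qed
    show "length q \<le> j \<Longrightarrow> covby P ((q @ [y]) ! j) ((q @ [y]) ! Suc j) \<and> lev ((q @ [y]) ! Suc j) = Suc (lev ((q @ [y]) ! j)) \<or>
     j \<noteq> length q \<and> covby P ((q @ [y]) ! Suc j) ((q @ [y]) ! j) \<and> lev ((q @ [y]) ! Suc j) = lev ((q @ [y]) ! j)"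
      using j by simp
  next
    fix j assume "j \<le> length q"
    thus "(q @ [y]) ! j \<in> X 0" using g y0 unfolding good_def
      by (auto simp: nth_append)
  qed (use g yR ne in \<open>auto simp: good_def nth_append\<close>)
qed

end



context comb begin

lemma X_R: "x \<in> X n \<Longrightarrow> x \<in> R"
  unfolding R_def by (intro UN_I[OF UNIV_I])

lemma good_prefix_aux:
  "card {y\<in>P. y < x} = N \<Longrightarrow> x \<in> X 0 \<Longrightarrow> \<exists>q. good q (length q - 1) \<and> last q = x"
proof (induction N arbitrary: x rule: less_induct)
  case (less N)
  have xP: "x \<in> P" using less(3) by simp
  show ?case
  proof (cases "\<exists>y\<in>P. y < x")
    case False
    have "good [x] 0" unfolding good_def using False less(3) X_R[OF less(3)] by auto
    thus ?thesis by (intro exI[of _ "[x]"]) simp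
  next
    case True
    then obtain y where y: "y \<in> P" "y < x" by blast
    obtain y' where y': "y' \<in> P" "y \<le> y'" "covby P y' x"
      using cover_below[OF finP y(1) xP y(2)] by blast
    have yx: "y' < x" using y' by (simp add: covby_def)
    have y'0: "y' \<in> X 0" using X_down[OF less(3) y'(1)] yx by simp
    have sub: "{w\<in>P. w < y'} \<subset> {w\<in>P. w < x}" using yx y' by (auto intro: less_trans)
    have "card {w\<in>P. w < y'} < N" using psubset_card_mono[OF _ sub] finP less(2) by auto
    then obtain q where q: "good q (length q - 1)" "last q = y'" using less(1)[OF _ refl y'0] by blast
    have "good (q@[x]) (length q)" using good_snoc_pre[OF q(1) less(3)] q(2) y'(3) by simp
    thus ?thesis by (intro exI[of _ "q@[x]"]) simp
  qed
qed

lemma good_prefix: "x \<in> X 0 \<Longrightarrow> \<exists>q. good q (length q - 1) \<and> last q = x"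
  using good_prefix_aux by blast

lemma good_down_aux:
  "card {w\<in>P. x \<le> w \<and> w < last q} = N \<Longrightarrow> good q pe \<Longrightarrow> pe < length q - 1 \<Longrightarrow> x \<in> P
   \<Longrightarrow> x \<le> last q \<Longrightarrow> lev x = lev (last q) \<Longrightarrow> \<exists>q'. good q' pe \<and> last q' = x"
proof (induction N arbitrary: q rule: less_induct)
  case (less N)
  show ?case
  proof (cases "x = last q")
    case True thus ?thesis using less by blast
  next
    case False
    let ?z = "last q"
    have xz: "x < ?z" using False less(6) by simp
    have ne: "q \<noteq> []" using less(3) by (simp add: good_def)
    have zR: "?z \<in> R" using less(3) ne by (auto simp: good_def)
    then obtain n where zn: "?z \<in> X n" unfolding R_def by auto
    have zP: "?z \<in> P" using zn X_sub by auto
    obtain y where y: "y \<in> P" "x \<le> y" "covby P y ?z"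
      using cover_below[OF finP less(5) zP xz] by blast
    have yz: "y < ?z" using y by (simp add: covby_def)
    have yn: "y \<in> X n" using X_down[OF zn y(1)] yz by simp
    have "lev x \<le> lev y" using lev_mono[OF yn less(5) y(2)] .
    moreover have "lev y \<le> lev ?z" using lev_mono[OF zn y(1)] yz by simp
    ultimately have lvy: "lev y = lev ?z" using less(7) by simp
    have g2: "good (q@[y]) pe" using good_snoc_down[OF less(3) X_R[OF yn] y(3) lvy less(4)] .
    have sub: "{w\<in>P. x \<le> w \<and> w < y} \<subset> {w\<in>P. x \<le> w \<and> w < ?z}"
      using yz y by (auto intro: less_trans)
    have "card {w\<in>P. x \<le> w \<and> w < y} < N" using psubset_card_mono[OF _ sub] finP less(2) by auto
    moreover have "pe < length (q@[y]) - 1" using less(4) by simp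
    ultimately show ?thesis using less(1)[of _ "q@[y]"] g2 less(5) y(2) lvy less(7) by simp
  qed
qed

lemma good_down: "good q pe \<Longrightarrow> pe < length q - 1 \<Longrightarrow> x \<in> P
   \<Longrightarrow> x \<le> last q \<Longrightarrow> lev x = lev (last q) \<Longrightarrow> \<exists>q'. good q' pe \<and> last q' = x"
  using good_down_aux by blast

lemma good_exists: "x \<in> X n \<Longrightarrow> \<exists>q pe. good q pe \<and> last q = x"
proof (induction n arbitrary: x)
  case 0 thus ?case using good_prefix by blast
next
  case (Suc n)
  show ?case
  proof (cases "x \<in> X n")
    case True thus ?thesis using Suc.IH by blast
  next
    case False
    from Suc.prems obtain z where xP: "x \<in> P" and z: "x \<le> z"
      "z \<in> X n \<or> (z \<in> P \<and> (\<exists>p\<in>X n. covby P p z \<and> c p < c z + Q))" by auto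
    have znX: "z \<notin> X n" using False X_down xP z(1) by blast
    with z obtain p where p: "z \<in> P" "p \<in> X n" "covby P p z" "c p < c z + Q" by auto
    have zS: "z \<in> X (Suc n)" using X_up[OF p(2) p(3) p(4)] .
    have lz: "lev z = Suc n" using lev_eq[OF zS znX] .
    have lx: "lev x = Suc n" using lev_eq[OF Suc.prems False] .
    have lp: "lev p = n"
    proof -
      have "lev p \<le> n" "p \<in> X (lev p)" using lev_in[OF p(2)] by auto
      moreover have "\<not> lev p < n"
      proof
        assume "lev p < n"
        hence "z \<in> X (Suc (lev p))" using X_up[OF \<open>p \<in> X (lev p)\<close> p(3) p(4)] by simp
        moreover have "X (Suc (lev p)) \<subseteq> X n" using \<open>lev p < n\<close> X_mono[of "Suc (lev p)" n] by (simp del: X.simps)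
        ultimately show False using znX by blast
      qed
      ultimately show ?thesis by simp
    qed
    obtain q pe where q: "good q pe" "last q = p" using Suc.IH[OF p(2)] by blast
    have g2: "good (q@[z]) pe" using good_snoc_up[OF q(1) X_R[OF zS]] q(2) p(3) lz lp by simp
    have "pe < length (q@[z]) - 1" using q(1) by (simp add: good_def)
    then obtain q' where "good q' pe" "last q' = x"
      using good_down[OF g2 _ xP] z(1) lx lz by auto
    thus ?thesis by blast
  qed
qed

end



lemma sorted_rank:
  fixes S :: "nat set"
  assumes "finite S" "k < card S"
  shows "card {y\<in>S. y < sorted_list_of_set S ! k} = k \<and> sorted_list_of_set S ! k \<in> S"
proof -
  let ?xs = "sorted_list_of_set S"
  have st: "sorted_wrt (<) ?xs" using assms by (simp add: strict_sorted_list_of_set)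
  have set: "set ?xs = S" and len: "length ?xs = card S" using assms by auto
  have dist: "distinct ?xs" using assms by simp
  have kl: "k < length ?xs" using len assms by simp
  have eq: "{y\<in>S. y < ?xs ! k} = set (take k ?xs)"
  proof
    show "{y \<in> S. y < ?xs ! k} \<subseteq> set (take k ?xs)"
    proof
      fix y assume y: "y \<in> {y \<in> S. y < ?xs ! k}"
      then obtain i where i: "i < length ?xs" "?xs ! i = y" using set[symmetric] by (metis (no_types, lifting) in_set_conv_nth mem_Collect_eq)
      have "i < k"
      proof (rule ccontr)
        assume "\<not> i < k"
        hence "k = i \<or> k < i" by auto
        thus False
        proof
          assume "k = i" thus False using y i by auto
        next
          assume "k < i" hence "?xs ! k < ?xs ! i" using sorted_wrt_nth_less[OF st] i by blast
          thus False using y i by auto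
        qed
      qed
      thus "y \<in> set (take k ?xs)" using i by (auto simp: in_set_conv_nth)
    qed
  next
    show "set (take k ?xs) \<subseteq> {y \<in> S. y < ?xs ! k}"
    proof
      fix y assume "y \<in> set (take k ?xs)"
      then obtain i where i: "i < k" "?xs ! i = y" using kl by (auto simp: in_set_conv_nth)
      have "?xs ! i < ?xs ! k" using sorted_wrt_nth_less[OF st i(1) kl] .
      moreover have "y \<in> S" using i kl set by (metis less_trans nth_mem)
      ultimately show "y \<in> {y \<in> S. y < ?xs ! k}" using i by auto
    qed
  qed
  have "card (set (take k ?xs)) = k" using distinct_card[of "take k ?xs"] dist kl by simp
  moreover have "?xs ! k \<in> S" using kl set nth_mem by blast
  ultimately show ?thesis using eq by simp
qed

lemma card_less_Suc:
  fixes S :: "nat set"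
  assumes "finite S"
  shows "card {d\<in>S. d < Suc x} = card {d\<in>S. d < x} + (if x \<in> S then 1 else 0)"
proof -
  have fin: "finite {d\<in>S. d < x}" by simp
  show ?thesis
  proof (cases "x \<in> S")
    case True
    have "{d\<in>S. d < Suc x} = insert x {d\<in>S. d < x}" using True by auto
    thus ?thesis using True fin by simp
  next
    case False
    have "{d\<in>S. d < Suc x} = {d\<in>S. d < x}" using False by (auto simp: less_Suc_eq)
    thus ?thesis using False by simp
  qed
qed

lemma loc_count:
  fixes P :: "'a::order set" and q :: "'a list"
  assumes steps: "\<And>j. Suc j < length q \<Longrightarrow> covby P (q!j) (q!Suc j) \<or> covby P (q!Suc j) (q!j)"
    and first: "2 \<le> length q \<Longrightarrow> covby P (q!0) (q!1)"
    and x: "x < length q"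
  shows "card {d\<in>loc_min_idx P q. d < x} = card {a\<in>loc_max_idx P q. a < x}
           + (if 0 < x \<and> covby P (q!(x-1)) (q!x) then 1 else 0)"
  using x
proof (induction x)
  case 0 thus ?case by simp
next
  case (Suc x)
  have fin1: "finite (loc_min_idx P q)" unfolding loc_min_idx_def by simp
  have fin2: "finite (loc_max_idx P q)" unfolding loc_max_idx_def by simp
  have IH: "card {d\<in>loc_min_idx P q. d < x} = card {a\<in>loc_max_idx P q. a < x}
           + (if 0 < x \<and> covby P (q!(x-1)) (q!x) then 1 else 0)" using Suc by simp
  have sx: "Suc x < length q" using Suc.prems .
  have u2: "covby P (q!x) (q!Suc x) \<or> covby P (q!Suc x) (q!x)" using steps[OF sx] .
  have ex2: "\<not> (covby P (q!x) (q!Suc x) \<and> covby P (q!Suc x) (q!x))" using covby_not_sym by blast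
  show ?case
  proof (cases x)
    case 0
    have "x \<in> loc_min_idx P q" using 0 sx by (auto simp: loc_min_idx_def)
    moreover have "x \<notin> loc_max_idx P q" using 0 sx by (simp add: loc_max_idx_def)
    moreover have "covby P (q!0) (q!1)" using first sx by simp
    ultimately show ?thesis using card_less_Suc[OF fin1, of x] card_less_Suc[OF fin2, of x] IH 0 by simp
  next
    case (Suc y)
    have xy: "x - 1 = y" "Suc y = x" using Suc by auto
    have u1: "covby P (q!y) (q!x) \<or> covby P (q!x) (q!y)" using steps[of y] sx xy by auto
    have ex1: "\<not> (covby P (q!y) (q!x) \<and> covby P (q!x) (q!y))" using covby_not_sym by blast
    have mx: "(x \<in> loc_max_idx P q) = (covby P (q!y) (q!x) \<and> covby P (q!Suc x) (q!x))"
      using sx xy by (auto simp: loc_max_idx_def)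
    have mn: "(x \<in> loc_min_idx P q) = (covby P (q!x) (q!y) \<and> covby P (q!x) (q!Suc x))"
      using sx xy by (auto simp: loc_min_idx_def)
    show ?thesis using card_less_Suc[OF fin1, of x] card_less_Suc[OF fin2, of x] IH mx mn u1 u2 ex1 ex2 xy
      by (auto split: if_splits)
  qed
qed




context comb begin

lemma good_step:
  assumes "good q pe" "Suc j < length q"
  shows "(covby P (q!j) (q!Suc j) \<and> (pe \<le> j \<longrightarrow> lev (q!Suc j) = Suc (lev (q!j)))
           \<and> (j < pe \<longrightarrow> lev (q!Suc j) = lev (q!j)))
       \<or> (covby P (q!Suc j) (q!j) \<and> pe < j \<and> lev (q!Suc j) = lev (q!j))"
proof (cases "j < pe")
  case True
  have "q!j \<in> X 0" "q!Suc j \<in> X 0" using assms True unfolding good_def by auto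
  thus ?thesis using assms True lev0 unfolding good_def by auto
next
  case False
  thus ?thesis using assms unfolding good_def by auto
qed

lemma good_up: "good q pe \<Longrightarrow> Suc j < length q \<Longrightarrow> covby P (q!j) (q!Suc j) \<Longrightarrow> pe \<le> j
   \<Longrightarrow> lev (q!Suc j) = Suc (lev (q!j))"
  using good_step covby_not_sym by blast

lemma good_down_pe: "good q pe \<Longrightarrow> Suc j < length q \<Longrightarrow> covby P (q!Suc j) (q!j) \<Longrightarrow> pe < j"
  using good_step covby_not_sym by blast

lemma good_lev_step: "good q pe \<Longrightarrow> Suc j < length q \<Longrightarrow> lev (q!j) \<le> lev (q!Suc j)"
  using good_step[of q pe j] by auto

lemma good_lev_mono: "good q pe \<Longrightarrow> i \<le> j \<Longrightarrow> j < length q \<Longrightarrow> lev (q!i) \<le> lev (q!j)"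
proof (induction j)
  case 0 thus ?case by simp
next
  case (Suc j)
  show ?case
  proof (cases "i = Suc j")
    case True thus ?thesis by simp
  next
    case False
    hence "lev (q!i) \<le> lev (q!j)" using Suc by simp
    thus ?thesis using good_lev_step[OF Suc.prems(1), of j] Suc.prems by simp
  qed
qed

lemma good_lev_ups: "good q pe \<Longrightarrow> j < length q \<Longrightarrow>
  lev (q!j) \<le> card {i. i < j \<and> covby P (q!i) (q!Suc i)}"
proof (induction j)
  case 0
  have "q!0 \<in> X 0" using 0 unfolding good_def by auto
  thus ?case using lev0 by simp
next
  case (Suc j)
  have IH: "lev (q!j) \<le> card {i. i < j \<and> covby P (q!i) (q!Suc i)}" using Suc by simp
  have eq: "{i. i < Suc j \<and> covby P (q!i) (q!Suc i)} =
     {i. i < j \<and> covby P (q!i) (q!Suc i)} \<union> (if covby P (q!j) (q!Suc j) then {j} else {})"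
    by (auto simp: less_Suc_eq)
  show ?case
  proof (cases "covby P (q!j) (q!Suc j)")
    case True
    hence "card {i. i < Suc j \<and> covby P (q!i) (q!Suc i)} = Suc (card {i. i < j \<and> covby P (q!i) (q!Suc i)})"
      using eq by simp
    moreover have "lev (q!Suc j) \<le> Suc (lev (q!j))" using good_step[OF Suc.prems] by auto
    ultimately show ?thesis using IH by simp
  next
    case False
    hence "lev (q!Suc j) = lev (q!j)" using good_step[OF Suc.prems] by auto
    moreover have "card {i. i < Suc j \<and> covby P (q!i) (q!Suc i)} = card {i. i < j \<and> covby P (q!i) (q!Suc i)}"
      using eq False by simp
    ultimately show ?thesis using IH by simp
  qed
qed

lemma chain_down: "(\<And>k. a \<le> k \<Longrightarrow> k < b \<Longrightarrow> covby P (q!Suc k) (q!k)) \<Longrightarrow> a < b \<Longrightarrow> q!b < q!a"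
proof (induction b)
  case 0 thus ?case by simp
next
  case (Suc b)
  have c: "q!Suc b < q!b" using Suc.prems(1)[of b] Suc.prems(2) by (simp add: covby_def)
  show ?case
  proof (cases "a = b")
    case True thus ?thesis using c by simp
  next
    case False
    hence "q!b < q!a" using Suc by simp
    thus ?thesis using c by simp
  qed
qed

lemma chain_up: "(\<And>k. a \<le> k \<Longrightarrow> k < b \<Longrightarrow> covby P (q!k) (q!Suc k)) \<Longrightarrow> a < b \<Longrightarrow> q!a < q!b"
proof (induction b)
  case 0 thus ?case by simp
next
  case (Suc b)
  have c: "q!b < q!Suc b" using Suc.prems(1)[of b] Suc.prems(2) by (simp add: covby_def)
  show ?case
  proof (cases "a = b")
    case True thus ?thesis using c by simp
  next
    case False
    hence "q!a < q!b" using Suc by simp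
    thus ?thesis using c by simp
  qed
qed

lemma good_distinct:
  assumes g: "good q pe"
  shows "distinct q"
proof -
  have "q!a \<noteq> q!b" if ab: "a < b" "b < length q" for a b
  proof
    assume eq: "q!a = q!b"
    show False
    proof (cases "pe \<le> a")
      case True
      have "covby P (q!Suc k) (q!k)" if k: "a \<le> k" "k < b" for k
      proof -
        have sk: "Suc k < length q" using k ab by simp
        show ?thesis
        proof (rule ccontr)
          assume "\<not> covby P (q!Suc k) (q!k)"
          hence up: "covby P (q!k) (q!Suc k)" using g sk unfolding good_def by auto
          have "lev (q!Suc k) = Suc (lev (q!k))" using good_up[OF g sk up] True k by simp
          moreover have "lev (q!a) \<le> lev (q!k)" using good_lev_mono[OF g k(1)] sk by simp
          moreover have "lev (q!Suc k) \<le> lev (q!b)" using good_lev_mono[OF g _ ab(2)] k by simp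
          ultimately show False using eq by simp
        qed
      qed
      hence "q!b < q!a" using chain_down[of a b q] ab by blast
      thus False using eq by simp
    next
      case False
      show False
      proof (cases "b \<le> pe")
        case True
        have "covby P (q!k) (q!Suc k)" if k: "a \<le> k" "k < b" for k
          using g k True ab unfolding good_def by auto
        hence "q!a < q!b" using chain_up[of a b q] ab by blast
        thus False using eq by simp
      next
        case False2: False
        have sp: "Suc pe < length q" using False2 ab by simp
        have "covby P (q!pe) (q!Suc pe)" using good_down_pe[OF g sp] g sp unfolding good_def by auto
        hence "lev (q!Suc pe) = Suc (lev (q!pe))" using good_up[OF g sp] by simp
        moreover have "lev (q!Suc pe) \<le> lev (q!b)" using good_lev_mono[OF g _ ab(2)] False2 by simp
        moreover have "q!a \<in> X 0" using g False unfolding good_def by auto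
        ultimately show False using eq lev0 by simp
      qed
    qed
  qed
  thus ?thesis by (simp add: distinct_conv_nth) (metis linorder_neqE_nat)
qed

end



context comb begin

lemma good_below: "good q pe \<Longrightarrow> x \<in> P \<Longrightarrow> j < length q \<Longrightarrow> x \<le> q!j \<Longrightarrow> lev x \<le> lev (q!j)"
proof -
  assume g: "good q pe" and x: "x \<in> P" "j < length q" "x \<le> q!j"
  have "q!j \<in> R" using g x(2) unfolding good_def by (auto dest: nth_mem)
  then obtain N where "q!j \<in> X N" unfolding R_def by auto
  thus ?thesis using lev_mono x by blast
qed

lemma good_maxpath:
  assumes g: "good q pe" and mx: "\<forall>y\<in>P. \<not> last q < y" and pl: "pe < length q - 1"
  shows "is_maximal_path P q \<and> star_cond P q"
proof -
  define L where "L = length q"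
  have ne: "q \<noteq> []" using g by (simp add: good_def)
  have L2: "2 \<le> L" using pl g unfolding L_def good_def by auto
  have lastq: "last q = q!(L-1)" using ne by (simp add: L_def last_conv_nth)
  have setP: "set q \<subseteq> P" using g R_sub unfolding good_def by auto
  have qP: "\<And>j. j < L \<Longrightarrow> q!j \<in> P" using setP unfolding L_def by auto
  have min0: "\<forall>y\<in>P. \<not> y < q!0" using g by (simp add: good_def)
  have steps: "\<And>j. Suc j < length q \<Longrightarrow> covby P (q!j) (q!Suc j) \<or> covby P (q!Suc j) (q!j)"
    using g unfolding good_def by auto
  have first: "covby P (q!0) (q!1)"
  proof -
    have "covby P (q!0) (q!Suc 0) \<or> covby P (q!Suc 0) (q!0)" using steps[of 0] L2 L_def by simp
    moreover have "\<not> covby P (q!Suc 0) (q!0)" using min0 qP[of "Suc 0"] L2 by (auto simp: covby_def)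
    ultimately show ?thesis by simp
  qed
  have lastup: "covby P (q!(L-2)) (q!(L-1))"
  proof -
    have e: "Suc (L-2) = L - 1" using L2 by simp
    have "covby P (q!(L-2)) (q!Suc (L-2)) \<or> covby P (q!Suc (L-2)) (q!(L-2))" using steps[of "L-2"] L2 L_def by simp
    moreover have "\<not> covby P (q!Suc (L-2)) (q!(L-2))" using mx lastq e by (auto simp: covby_def)
    ultimately show ?thesis using e by simp
  qed
  have dist: "distinct q" using good_distinct[OF g] .
  have ismax: "is_maximal_path P q"
    unfolding is_maximal_path_def is_path_def
    using ne dist setP min0 steps lastup L2 mx unfolding L_def by (auto simp: numeral_2_eq_2)
  define LM where "LM = loc_max_idx P q"
  define Lm where "Lm = loc_min_idx P q"
  define n where "n = card LM"
  have LMsub: "LM \<subseteq> {..<L}" unfolding LM_def loc_max_idx_def L_def by auto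
  have Lmsub: "Lm \<subseteq> {..<L}" unfolding Lm_def loc_min_idx_def L_def by auto
  have finLM: "finite LM" using LMsub finite_subset by blast
  have finLm: "finite Lm" using Lmsub finite_subset by blast
  have lastLM: "L - 1 \<in> LM" using L2 unfolding LM_def loc_max_idx_def L_def by auto
  have cntLast: "card {y\<in>LM. y < L - 1} = n - 1"
  proof -
    have "{y\<in>LM. y < L - 1} = LM - {L-1}" using LMsub by auto
    thus ?thesis using lastLM finLM n_def by simp
  qed
  have cnt: "\<And>x. x < L \<Longrightarrow> card {d\<in>Lm. d < x} = card {a\<in>LM. a < x}
           + (if 0 < x \<and> covby P (q!(x-1)) (q!x) then 1 else 0)"
    unfolding LM_def Lm_def using loc_count[OF steps] first L_def by auto
  have npos: "0 < n" using lastLM finLM n_def card_gt_0_iff by blast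
  have "card {d\<in>Lm. d < L - 1} = n"
    using cnt[of "L-1"] L2 cntLast lastup n_def npos
    by (simp add: numeral_2_eq_2)
  hence nLm: "n \<le> card Lm" using card_mono[OF finLm, of "{d\<in>Lm. d < L - 1}"] by auto
  have aF: "\<And>m. 1 \<le> m \<Longrightarrow> m \<le> n \<Longrightarrow> a_end P q m \<in> LM \<and> card {y\<in>LM. y < a_end P q m} = m - 1"
    unfolding a_end_def LM_def using sorted_rank[OF finLM[unfolded LM_def]] n_def LM_def
    by (metis One_nat_def Suc_le_lessD Suc_pred conj_commute diff_less_Suc le_trans less_eq_Suc_le)
  have amono: "\<And>m m'. 1 \<le> m \<Longrightarrow> m < m' \<Longrightarrow> m' \<le> n \<Longrightarrow> a_end P q m < a_end P q m'"
  proof -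
    fix m m' assume h: "1 \<le> m" "m < m'" "m' \<le> n"
    show "a_end P q m < a_end P q m'"
    proof (rule ccontr)
      assume "\<not> a_end P q m < a_end P q m'"
      hence "{y\<in>LM. y < a_end P q m'} \<subseteq> {y\<in>LM. y < a_end P q m}" by auto
      hence "card {y\<in>LM. y < a_end P q m'} \<le> card {y\<in>LM. y < a_end P q m}"
        by (intro card_mono) (use finLM in auto)
      thus False using aF[of m] aF[of m'] h by simp
    qed
  qed
  have star: "star_cond P q"
    unfolding star_cond_def
  proof (intro allI impI)
    fix i assume i: "1 \<le> i \<and> i \<le> nblocks P q - 1"
    hence i1: "1 \<le> i" and in1: "i < n" using L2 n_def LM_def lastLM finLM
      by (auto simp: nblocks_def)
    define a where "a = a_end P q i"
    have aLM: "a \<in> LM" and ark: "card {y\<in>LM. y < a} = i - 1" using aF[of i] i1 in1 a_def by auto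
    have aL: "a < L" using aLM LMsub by auto
    have anl: "a \<noteq> L - 1" using ark cntLast in1 i1 by auto
    have aint: "0 < a \<and> covby P (q!(a-1)) (q!a) \<and> covby P (q!Suc a) (q!a)"
      using aLM anl unfolding LM_def loc_max_idx_def L_def by auto
    have sa: "Suc a < length q" using aL anl L_def by simp
    have pea: "pe < a" using good_down_pe[OF g sa] aint by simp
    have sa1: "Suc (a-1) = a" using aint by simp
    have leva: "lev (q!a) = Suc (lev (q!(a-1)))"
      using good_up[OF g, of "a-1"] sa1 aint pea aL L_def by simp
    have notup: "\<not> covby P (q!a) (q!Suc a)" using aint covby_not_sym by blast
    have cLma: "card {d\<in>Lm. d < Suc a} = i"
    proof -
      have "card {d\<in>Lm. d < Suc a} = card {b\<in>LM. b < Suc a}"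
        using cnt[of "Suc a"] sa notup L_def by simp
      also have "\<dots> = i" using card_less_Suc[OF finLM, of a] aLM ark i1 by simp
      finally show ?thesis .
    qed
    define d where "d = d_end P q i"
    have dF: "card {y\<in>Lm. y < d} = i \<and> d \<in> Lm"
      unfolding d_def d_end_def Lm_def using sorted_rank[OF finLm[unfolded Lm_def], of i] nLm in1 Lm_def by simp
    have ad: "a < d"
    proof (rule ccontr)
      assume "\<not> a < d"
      hence "{y\<in>Lm. y < Suc d} \<subseteq> {y\<in>Lm. y < Suc a}" by auto
      hence "card {y\<in>Lm. y < Suc d} \<le> card {y\<in>Lm. y < Suc a}"
        by (intro card_mono) (use finLm in auto)
      thus False using card_less_Suc[OF finLm, of d] dF cLma by simp
    qed
    have dint: "Suc d < length q \<and> covby P (q!d) (q!Suc d)"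
      using dF ad unfolding Lm_def loc_min_idx_def by auto
    have levd: "lev (q!Suc d) = Suc (lev (q!d))" using good_up[OF g] dint pea ad by simp
    have levad: "lev (q!a) \<le> lev (q!d)" using good_lev_mono[OF g] ad dint by simp
    have genA_bound: "\<And>m x. m \<in> {1..i} \<Longrightarrow> x \<in> genA P q m \<Longrightarrow> lev x \<le> lev (q!a)"
    proof -
      fix m x assume m: "m \<in> {1..i}" and x: "x \<in> genA P q m"
      have am: "a_end P q m \<in> LM" using aF[of m] m in1 by auto
      have aml: "a_end P q m \<le> a" using amono[of m i] m in1 a_def by (cases "m = i") auto
      have "lev x \<le> lev (q ! a_end P q m)"
        using good_below[OF g] x am LMsub L_def by (auto simp: genA_def tA_def)
      also have "\<dots> \<le> lev (q!a)" using good_lev_mono[OF g aml] aL L_def by simp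
      finally show "lev x \<le> lev (q!a)" .
    qed
    show "VD P q i \<inter> ((\<Union>m\<in>{1..<i}. genA P q m) \<union> genA_minus P q i \<union> {tA P q i}) = {} \<and>
         VA P q (Suc i) \<inter> (\<Union>m\<in>{1..i}. genA P q m) = {}"
    proof (intro conjI)
      show "VD P q i \<inter> ((\<Union>m\<in>{1..<i}. genA P q m) \<union> genA_minus P q i \<union> {tA P q i}) = {}"
      proof (rule ccontr)
        assume "VD P q i \<inter> ((\<Union>m\<in>{1..<i}. genA P q m) \<union> genA_minus P q i \<union> {tA P q i}) \<noteq> {}"
        then obtain j where j: "a < j" "j \<le> d"
          and jin: "q!j \<in> (\<Union>m\<in>{1..<i}. genA P q m) \<union> genA_minus P q i \<union> {tA P q i}"
          unfolding VD_def a_def d_def by blast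
        have jL: "j < length q" using j dint by simp
        have levj: "lev (q!a) \<le> lev (q!j)" using good_lev_mono[OF g] j jL by simp
        have "q!j \<in> (\<Union>m\<in>{1..<i}. genA P q m) \<or> q!j \<in> genA_minus P q i \<or> q!j = tA P q i"
          using jin by blast
        thus False
        proof (elim disjE)
          assume "q!j \<in> (\<Union>m\<in>{1..<i}. genA P q m)"
          then obtain m where m: "m \<in> {1..<i}" "q!j \<in> genA P q m" by blast
          have am: "a_end P q m \<in> LM" using aF[of m] m in1 by auto
          have aml: "a_end P q m \<le> a - 1" using amono[of m i] m in1 a_def by auto
          have "lev (q!j) \<le> lev (q ! a_end P q m)"
            using good_below[OF g] m am LMsub L_def by (auto simp: genA_def tA_def)
          also have "\<dots> \<le> lev (q!(a-1))" using good_lev_mono[OF g aml] aL L_def by simp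
          finally show False using leva levj by simp
        next
          assume "q!j \<in> genA_minus P q i"
          then obtain y where y: "q!j \<in> P" "y \<in> VA P q i" "y \<noteq> tA P q i" "q!j \<le> y"
            unfolding genA_minus_def by blast
          then obtain j' where j': "y = q!j'" "j' \<le> a" unfolding VA_def a_def by auto
          have "j' \<noteq> a" using j' y(3) unfolding tA_def a_def by auto
          hence j'a: "j' \<le> a - 1" using j'(2) by simp
          have "lev (q!j) \<le> lev (q!j')" using good_below[OF g] y j' aL L_def by auto
          also have "\<dots> \<le> lev (q!(a-1))" using good_lev_mono[OF g j'a] aL L_def by simp
          finally show False using leva levj by simp
        next
          assume "q!j = tA P q i"
          hence "q!j = q!a" unfolding tA_def a_def .
          thus False using dist j jL aL L_def nth_eq_iff_index_eq by fastforce
        qed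
      qed
      show "VA P q (Suc i) \<inter> (\<Union>m\<in>{1..i}. genA P q m) = {}"
      proof (rule ccontr)
        assume "VA P q (Suc i) \<inter> (\<Union>m\<in>{1..i}. genA P q m) \<noteq> {}"
        then obtain j m where j: "d < j" "j \<le> a_end P q (Suc i)" and m: "m \<in> {1..i}" "q!j \<in> genA P q m"
          unfolding VA_def d_def using i1 by (auto simp: atLeastAtMost_iff) blast
        have "a_end P q (Suc i) \<in> LM" using aF[of "Suc i"] in1 by simp
        hence jL: "j < length q" using j LMsub L_def by auto
        have "lev (q!Suc d) \<le> lev (q!j)" using good_lev_mono[OF g] j jL by simp
        moreover have "lev (q!j) \<le> lev (q!a)" using genA_bound[OF m] .
        ultimately show False using levd levad by simp
      qed
    qed
  qed
  show ?thesis using ismax star by simp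
qed

end



lemma rank_star_ge:
  assumes "finite P" "is_maximal_path P q" "star_cond P q"
  shows "len_star P q \<le> rank_star P"
proof -
  let ?S = "{len_star P q | q. is_maximal_path P q \<and> star_cond P q}"
  have "?S \<subseteq> len_star P ` {q. set q \<subseteq> P \<and> length q \<le> card P}"
  proof
    fix k assume "k \<in> ?S"
    then obtain q' where q': "k = len_star P q'" "is_maximal_path P q'" by blast
    hence "set q' \<subseteq> P" "distinct q'" by (auto simp: is_maximal_path_def is_path_def)
    hence "length q' \<le> card P" using distinct_card[of q'] card_mono[OF assms(1) \<open>set q' \<subseteq> P\<close>] by simp
    thus "k \<in> len_star P ` {q. set q \<subseteq> P \<and> length q \<le> card P}" using q' \<open>set q' \<subseteq> P\<close> by blast
  qed
  moreover have "finite (len_star P ` {q. set q \<subseteq> P \<and> length q \<le> card P})"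
    using finite_lists_length_le[OF assms(1)] by blast
  ultimately have "finite ?S" by (rule finite_subset)
  moreover have "len_star P q \<in> ?S" using assms by blast
  ultimately show ?thesis unfolding rank_star_def by (rule Max_ge)
qed

context comb begin

lemma comb_main:
  assumes cle: "\<forall>x\<in>P. c x \<le> s" and bnd: "(rank_star P + 2) * (Q - 1) + 1 \<le> s"
  shows "\<exists>I \<in> poset_ideals P. (\<forall>x\<in>I. Q \<le> c x) \<and> (\<forall>x\<in>P. x \<notin> I \<longrightarrow> c x + Q \<le> s)
     \<and> (\<forall>x\<in>P. \<forall>y\<in>P. x \<le> y \<longrightarrow> c y - (if y\<in>I then Q else 0) \<le> c x - (if x\<in>I then Q else 0))"
proof (cases "\<exists>l\<in>R. c l < Q")
  case True
  then obtain l where l: "l \<in> R" "c l < Q" by blast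
  have lP: "l \<in> P" using l R_sub by auto
  have finL: "finite {w\<in>P. l \<le> w}" using finP by simp
  have neL: "{w\<in>P. l \<le> w} \<noteq> {}" using lP by blast
  obtain M where M: "M \<in> {w\<in>P. l \<le> w}" "\<forall>b\<in>{w\<in>P. l \<le> w}. M \<le> b \<longrightarrow> M = b"
    using finite_has_maximal[OF finL neL] by blast
  have MP: "M \<in> P" and lM: "l \<le> M" using M by auto
  have Mmax: "\<forall>y\<in>P. \<not> M < y"
  proof (intro ballI notI)
    fix y assume y: "y \<in> P" "M < y"
    hence "y \<in> {w\<in>P. l \<le> w}" using lM by simp
    hence "M = y" using M(2) y(2) by (meson less_imp_le)
    thus False using y(2) by simp
  qed
  have cM: "c M \<le> c l" using crev[OF lP MP lM] .
  have MR: "M \<in> R" using R_up[OF l(1) MP lM] l(2) by simp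
  then obtain N where MN: "M \<in> X N" unfolding R_def by blast
  obtain q pe where q: "good q pe" "last q = M" using good_exists[OF MN] by blast
  have "2 * (Q - 1) \<le> (rank_star P + 2) * (Q - 1)" by (rule mult_le_mono1) simp
  hence s2: "2 * (Q - 1) + 1 \<le> s" using bnd by linarith
  have M0: "M \<notin> X 0"
  proof
    assume "M \<in> X 0" hence "s - Q < c M" by simp
    thus False using cM l(2) s2 by linarith
  qed
  have ne: "q \<noteq> []" and pel: "pe < length q" using q by (auto simp: good_def)
  have pl: "pe < length q - 1"
  proof (rule ccontr)
    assume "\<not> pe < length q - 1"
    hence "pe = length q - 1" using pel by simp
    moreover have "\<forall>j\<le>pe. q!j \<in> X 0" using q(1) unfolding good_def by blast
    ultimately have "q ! (length q - 1) \<in> X 0" by simp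
    thus False using M0 q(2) ne by (simp add: last_conv_nth)
  qed
  have mp: "is_maximal_path P q \<and> star_cond P q" using good_maxpath[OF q(1) _ pl] Mmax q(2) by blast
  have ls: "len_star P q \<le> rank_star P" using rank_star_ge[OF finP] mp by blast
  have "lev (q ! (length q - 1)) \<le> card {i. i < length q - 1 \<and> covby P (q!i) (q!Suc i)}"
    using good_lev_ups[OF q(1)] ne by simp
  moreover have "{i. i < length q - 1 \<and> covby P (q!i) (q!Suc i)} = {i. Suc i < length q \<and> covby P (q!i) (q!Suc i)}"
    by auto
  moreover have "M = q ! (length q - 1)" using q(2) ne by (simp add: last_conv_nth)
  ultimately have "lev M \<le> len_star P q" unfolding len_star_def by simp
  hence dK: "lev M \<le> rank_star P" using ls by simp
  have "s < c M + Q + (Q - 1) * lev M" using X_bound lev_in[OF MN] by blast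
  hence "s < (Q - 1) + Q + (Q - 1) * lev M" using cM l(2) by linarith
  hence "(rank_star P + 2) * (Q - 1) + 1 < (Q - 1) + Q + (Q - 1) * lev M" using bnd by linarith
  moreover have "(Q - 1) * lev M \<le> (Q - 1) * rank_star P" using dK by simp
  moreover have "(rank_star P + 2) * (Q - 1) = (Q - 1) * rank_star P + (Q - 1) + (Q - 1)"
    by (metis add_mult_distrib mult.commute mult_2 add.assoc)
  ultimately have False using Qpos by linarith
  thus ?thesis ..
next
  case False
  have ideal: "R \<in> poset_ideals P"
    unfolding poset_ideals_def
  proof (intro CollectI conjI ballI impI)
    show "R \<subseteq> P" by (rule R_sub)
    fix x y assume "x \<in> R" "y \<in> P" "y \<le> x"
    then obtain n where "x \<in> X n" unfolding R_def by blast
    thus "y \<in> R" using X_down X_R \<open>y \<in> P\<close> \<open>y \<le> x\<close> by blast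
  qed
  have A: "\<forall>x\<in>R. Q \<le> c x" using False by auto
  have B: "\<forall>x\<in>P. x \<notin> R \<longrightarrow> c x + Q \<le> s"
  proof (intro ballI impI)
    fix x assume "x \<in> P" "x \<notin> R"
    hence "x \<notin> X 0" using X_R by blast
    have "2 * (Q - 1) \<le> (rank_star P + 2) * (Q - 1)" by (rule mult_le_mono1) simp
    hence "Q \<le> s" using bnd Qpos by linarith
    thus "c x + Q \<le> s" using \<open>x \<in> P\<close> \<open>x \<notin> X 0\<close> by auto
  qed
  have C: "\<forall>x\<in>P. \<forall>y\<in>P. x \<le> y \<longrightarrow> c y - (if y\<in>R then Q else 0) \<le> c x - (if x\<in>R then Q else 0)"
  proof (intro ballI impI)
    fix x y assume xy: "x \<in> P" "y \<in> P" "x \<le> y"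
    have cxy: "c y \<le> c x" using crev[OF xy] .
    show "c y - (if y\<in>R then Q else 0) \<le> c x - (if x\<in>R then Q else 0)"
    proof (cases "y \<in> R")
      case True
      then obtain n where "y \<in> X n" unfolding R_def by blast
      hence "x \<in> R" using X_down X_R xy by blast
      thus ?thesis using True cxy by simp
    next
      case yR: False
      show ?thesis
      proof (cases "x \<in> R")
        case True
        have "\<not> c x < c y + Q" using R_up[OF True xy(2) xy(3)] yR by blast
        thus ?thesis using True yR by simp
      next
        case False thus ?thesis using yR cxy by simp
      qed
    qed
  qed
  show ?thesis using ideal A B C by blast
qed

end



definition ge :: "'a set \<Rightarrow> ('a option \<Rightarrow>\<^sub>0 nat)" where
  "ge I = Poly_Mapping.single None 1 + (\<Sum>x\<in>I. Poly_Mapping.single (Some x) 1)"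

definition gp :: "'a set list \<Rightarrow> ('a, 'k::comm_ring_1) mpoly" where
  "gp Is = prod_list (map hibi_gen Is)"

lemma hibi_gen_ge: "hibi_gen I = Poly_Mapping.single (ge I) 1"
  unfolding hibi_gen_def ge_def ..

lemma gp_single: "(gp Is :: ('a, 'k::comm_ring_1) mpoly) = Poly_Mapping.single (sum_list (map ge Is)) 1"
proof (induction Is)
  case Nil thus ?case by (simp add: gp_def one_poly_mapping.abs_eq)
next
  case (Cons I Is)
  have "(gp (I#Is) :: ('a, 'k) mpoly) = hibi_gen I * gp Is" by (simp add: gp_def)
  also have "\<dots> = Poly_Mapping.single (ge I + sum_list (map ge Is)) 1"
    using Cons by (simp add: hibi_gen_ge mult_single)
  finally show ?case by simp
qed

lemma gp_append: "gp (Is @ Js) = gp Is * gp Js"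
  by (simp add: gp_def)

lemma lookup_ge_None: "Poly_Mapping.lookup (ge I) None = 1"
proof -
  have "Poly_Mapping.lookup (\<Sum>x\<in>I. Poly_Mapping.single (Some x) (1::nat)) None = 0"
    unfolding lookup_sum by (simp add: lookup_single)
  thus ?thesis unfolding ge_def lookup_add by (simp add: lookup_single)
qed

lemma lookup_ge_Some: "finite I \<Longrightarrow> Poly_Mapping.lookup (ge I) (Some x) = (if x \<in> I then 1 else 0)"
proof -
  assume f: "finite I"
  have "Poly_Mapping.lookup (\<Sum>y\<in>I. Poly_Mapping.single (Some y) (1::nat)) (Some x) = (\<Sum>y\<in>I. if y = x then 1 else 0)"
    unfolding lookup_sum by (intro sum.cong refl) (simp add: lookup_single when_def)
  also have "\<dots> = (if x \<in> I then 1 else 0)" using f by (simp add: sum.delta)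
  finally show ?thesis unfolding ge_def lookup_add by (simp add: lookup_single)
qed

lemma lookup_sum_list_ge: "Poly_Mapping.lookup (sum_list (map ge Is)) k = sum_list (map (\<lambda>I. Poly_Mapping.lookup (ge I) k) Is)"
  by (induction Is) (simp_all add: lookup_add)



lemma sum_list_ind: "sum_list (map (\<lambda>I. if x \<in> I then 1 else 0) Is) = length (filter (\<lambda>I. x \<in> I) Is)"
  by (induction Is) auto

lemma lookup_gpe_None: "Poly_Mapping.lookup (sum_list (map ge Is)) None = length Is"
  by (induction Is) (simp_all add: lookup_add lookup_ge_None)

lemma lookup_gpe_Some: "\<forall>I\<in>set Is. finite I \<Longrightarrow>
  Poly_Mapping.lookup (sum_list (map ge Is)) (Some x) = length (filter (\<lambda>I. x \<in> I) Is)"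
  by (induction Is) (simp_all add: lookup_add lookup_ge_Some)
inductive_set spanR :: "'a::order set \<Rightarrow> nat \<Rightarrow> ('a, 'k::field) mpoly set" for P :: "'a set" and s :: nat where
  z: "0 \<in> spanR P s"
| t: "Is \<in> lists (poset_ideals P) \<Longrightarrow> s \<le> length Is \<Longrightarrow> Poly_Mapping.single 0 a * gp Is \<in> spanR P s"
| a: "f \<in> spanR P s \<Longrightarrow> g \<in> spanR P s \<Longrightarrow> f + g \<in> spanR P s"

lemma spanR_mult_term:
  assumes "g \<in> spanR P t" "Is \<in> lists (poset_ideals P)" "s \<le> length Is"
  shows "(Poly_Mapping.single 0 a * gp Is) * g \<in> spanR P (s + t)"
  using assms(1)
proof (induction g rule: spanR.induct)
  case z thus ?case by (simp add: spanR.z)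
next
  case (t Js b)
  have "(Poly_Mapping.single 0 a * gp Is) * (Poly_Mapping.single 0 b * gp Js)
        = Poly_Mapping.single 0 (a * b) * gp (Is @ Js)"
  proof -
    have "(Poly_Mapping.single 0 a * gp Is) * (Poly_Mapping.single 0 b * gp Js)
        = (Poly_Mapping.single 0 a * Poly_Mapping.single 0 b) * (gp Is * gp Js)" by (simp add: ac_simps)
    also have "\<dots> = Poly_Mapping.single 0 (a * b) * gp (Is @ Js)" by (simp add: mult_single gp_append)
    finally show ?thesis .
  qed
  moreover have "Is @ Js \<in> lists (poset_ideals P)" "s + t \<le> length (Is @ Js)" using assms t by auto
  ultimately show ?case using spanR.t by metis
next
  case (a f g) thus ?case by (simp add: distrib_left spanR.a)
qed

lemma spanR_mult: "f \<in> spanR P s \<Longrightarrow> g \<in> spanR P t \<Longrightarrow> f * g \<in> spanR P (s + t)"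
proof (induction f rule: spanR.induct)
  case z thus ?case by (simp add: spanR.z)
next
  case (t Is a) thus ?case using spanR_mult_term by blast
next
  case (a f1 f2) thus ?case by (simp add: distrib_right spanR.a)
qed

lemma gp_Nil: "gp [] = 1" by (simp add: gp_def)

lemma one_spanR: "(1 :: ('a::order,'k::field) mpoly) \<in> spanR P 0"
proof -
  have "Poly_Mapping.single 0 (1::'k) * gp [] \<in> spanR P 0" by (rule spanR.t) auto
  thus ?thesis by (simp add: gp_Nil)
qed

lemma ring_spanR: "f \<in> hibi_ring P \<Longrightarrow> f \<in> spanR P 0"
proof (induction f rule: hibi_ring.induct)
  case (const c)
  have "Poly_Mapping.single 0 c * gp [] \<in> spanR P 0" by (rule spanR.t) auto
  thus ?case by (simp add: gp_Nil)
next
  case (gen I)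
  have "Poly_Mapping.single 0 1 * gp [I] \<in> spanR P 0" by (rule spanR.t) (use gen in auto)
  thus ?case by (simp add: gp_def)
next
  case (add f g) thus ?case by (simp add: spanR.a)
next
  case (mult f g) thus ?case using spanR_mult[of f P 0 g 0] by simp
qed

lemma spanR1_lookup0: "g \<in> spanR P 1 \<Longrightarrow> Poly_Mapping.lookup g 0 = 0"
proof (induction g rule: spanR.induct)
  case z thus ?case by simp
next
  case (t Is a)
  have "Poly_Mapping.single 0 a * gp Is = Poly_Mapping.single (sum_list (map ge Is)) a"
    by (simp add: gp_single mult_single)
  moreover have "sum_list (map ge Is) \<noteq> 0"
  proof
    assume "sum_list (map ge Is) = 0"
    hence "Poly_Mapping.lookup (sum_list (map ge Is)) None = 0" by simp
    thus False using lookup_gpe_None[of Is] t by simp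
  qed
  ultimately show ?case by (simp add: lookup_single when_def)
next
  case (a f g) thus ?case by (simp add: lookup_add)
qed

lemma spanR0_split: "f \<in> spanR P 0 \<Longrightarrow> \<exists>a g. f = Poly_Mapping.single 0 a + g \<and> g \<in> spanR P 1"
proof (induction f rule: spanR.induct)
  case z thus ?case by (intro exI[of _ 0]) (auto intro: spanR.z)
next
  case (t Is a)
  show ?case
  proof (cases "Is = []")
    case True thus ?thesis by (intro exI[of _ a] exI[of _ 0]) (auto simp: gp_Nil intro: spanR.z)
  next
    case False
    hence "Poly_Mapping.single 0 a * gp Is \<in> spanR P 1" using t by (intro spanR.t) (auto simp: Suc_le_eq)
    thus ?thesis by (intro exI[of _ 0] exI[of _ "Poly_Mapping.single 0 a * gp Is"]) simp
  qed
next
  case (a f g)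
  then obtain a1 g1 a2 g2 where "f = Poly_Mapping.single 0 a1 + g1" "g1 \<in> spanR P 1"
    "g = Poly_Mapping.single 0 a2 + g2" "g2 \<in> spanR P 1" by blast
  hence "f + g = Poly_Mapping.single 0 (a1 + a2) + (g1 + g2)" by (simp add: single_add ac_simps)
  moreover have "g1 + g2 \<in> spanR P 1" using \<open>g1 \<in> spanR P 1\<close> \<open>g2 \<in> spanR P 1\<close> by (rule spanR.a)
  ultimately show ?case by blast
qed

lemma max_spanR: "f \<in> hibi_max P \<Longrightarrow> f \<in> spanR P 1"
proof -
  assume f: "f \<in> hibi_max P"
  hence "f \<in> hibi_ring P" by (simp add: hibi_max_def)
  then obtain a g where ag: "f = Poly_Mapping.single 0 a + g" "g \<in> spanR P 1"
    using spanR0_split[OF ring_spanR] by blast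
  have "Poly_Mapping.lookup f 0 = a" using ag spanR1_lookup0[OF ag(2)] by (simp add: lookup_add)
  hence "a = 0" using f by (simp add: hibi_max_def)
  thus ?thesis using ag by simp
qed

lemma prod_spanR: "set xs \<subseteq> hibi_max P \<Longrightarrow> prod_list xs \<in> spanR P (length xs)"
proof (induction xs)
  case Nil thus ?case using one_spanR by simp
next
  case (Cons x xs)
  hence "x \<in> spanR P 1" "prod_list xs \<in> spanR P (length xs)" using max_spanR by auto
  thus ?case using spanR_mult[of x P 1 "prod_list xs" "length xs"] by simp
qed




lemma comb_main_ext:
  fixes P :: "'a::order set" and c :: "'a \<Rightarrow> nat"
  assumes "finite P" "\<And>x y. x \<in> P \<Longrightarrow> y \<in> P \<Longrightarrow> x \<le> y \<Longrightarrow> c y \<le> c x" "1 \<le> Q"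
    "\<forall>x\<in>P. c x \<le> s" "(rank_star P + 2) * (Q - 1) + 1 \<le> s"
  shows "\<exists>I \<in> poset_ideals P. (\<forall>x\<in>I. Q \<le> c x) \<and> (\<forall>x\<in>P. x \<notin> I \<longrightarrow> c x + Q \<le> s)
     \<and> (\<forall>x\<in>P. \<forall>y\<in>P. x \<le> y \<longrightarrow> c y - (if y\<in>I then Q else 0) \<le> c x - (if x\<in>I then Q else 0))"
  using comb.comb_main[OF comb.intro[OF assms(1) assms(2) assms(3)] assms(4) assms(5)] .

lemma length_filter_mono: "(\<And>I. I \<in> set Is \<Longrightarrow> A I \<Longrightarrow> B I) \<Longrightarrow> length (filter A Is) \<le> length (filter B Is)"
  by (induction Is) auto

lemma count_upt: "length (filter (\<lambda>j. j \<le> m) [1..<Suc N]) = min m N"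
  by (induction N) auto

lemma gp_ring: "set Js \<subseteq> poset_ideals P \<Longrightarrow> (gp Js :: ('a::order, 'k::field) mpoly) \<in> hibi_ring P"
proof (induction Js)
  case Nil
  have "Poly_Mapping.single 0 1 \<in> hibi_ring P" by (rule hibi_ring.const)
  thus ?case by (simp add: gp_Nil)
next
  case (Cons J Js)
  have "(hibi_gen J :: ('a, 'k) mpoly) \<in> hibi_ring P" using Cons.prems by (auto intro: hibi_ring.gen)
  moreover have "(gp Js :: ('a, 'k) mpoly) \<in> hibi_ring P" using Cons by simp
  ultimately have "(hibi_gen J * gp Js :: ('a, 'k) mpoly) \<in> hibi_ring P" by (rule hibi_ring.mult)
  thus ?case by (simp add: gp_def)
qed

lemma gen_max: "I \<in> poset_ideals P \<Longrightarrow> hibi_gen I \<in> hibi_max P"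
proof -
  assume I: "I \<in> poset_ideals P"
  have "ge I \<noteq> 0" using lookup_ge_None[of I] by auto
  hence "Poly_Mapping.lookup (hibi_gen I :: ('a, 'b) mpoly) 0 = 0"
    by (simp add: hibi_gen_ge lookup_single when_def)
  thus ?thesis using I by (simp add: hibi_max_def hibi_ring.gen)
qed

lemma key_term:
  fixes P :: "'a::order set"
  assumes finP: "finite P" and Is: "Is \<in> lists (poset_ideals P)" and Q: "1 \<le> Q"
    and bnd: "(rank_star P + 2) * (Q - 1) + 1 \<le> length Is"
  shows "(Poly_Mapping.single 0 a * gp Is :: ('a, 'k::field) mpoly) \<in> frob_pow (hibi_ring P) (hibi_max P) Q"
proof -
  define s where "s = length Is"
  define c where "c x = length (filter (\<lambda>I. x \<in> I) Is)" for x
  have Isid: "\<And>I. I \<in> set Is \<Longrightarrow> I \<in> poset_ideals P" using Is by auto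
  have IsP: "\<And>I. I \<in> set Is \<Longrightarrow> I \<subseteq> P" using Isid by (auto simp: poset_ideals_def)
  have crev: "\<And>x y. x \<in> P \<Longrightarrow> y \<in> P \<Longrightarrow> x \<le> y \<Longrightarrow> c y \<le> c x"
    unfolding c_def by (rule length_filter_mono) (use Isid in \<open>auto simp: poset_ideals_def\<close>)
  have cle: "\<forall>x\<in>P. c x \<le> s" unfolding c_def s_def by simp
  have "2 * (Q - 1) \<le> (rank_star P + 2) * (Q - 1)" by (rule mult_le_mono1) simp
  hence Qs: "Q \<le> s" using bnd Q unfolding s_def by linarith
  have bnd': "(rank_star P + 2) * (Q - 1) + 1 \<le> s" using bnd unfolding s_def .
  from comb_main_ext[OF finP crev Q cle bnd'] obtain I where I1: "I \<in> poset_ideals P"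
    and I234: "(\<forall>x\<in>I. Q \<le> c x) \<and> (\<forall>x\<in>P. x \<notin> I \<longrightarrow> c x + Q \<le> s) \<and>
    (\<forall>x\<in>P. \<forall>y\<in>P. x \<le> y \<longrightarrow> c y - (if y\<in>I then Q else 0) \<le> c x - (if x\<in>I then Q else 0))" ..
  have I: "I \<in> poset_ideals P" "\<forall>x\<in>I. Q \<le> c x" "\<forall>x\<in>P. x \<notin> I \<longrightarrow> c x + Q \<le> s"
    "\<forall>x\<in>P. \<forall>y\<in>P. x \<le> y \<longrightarrow> c y - (if y\<in>I then Q else 0) \<le> c x - (if x\<in>I then Q else 0)"
    using I1 I234 by simp_all
  have IP: "I \<subseteq> P" using I(1) by (simp add: poset_ideals_def)
  define c' where "c' x = c x - (if x \<in> I then Q else 0)" for x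
  have c'le: "\<And>x. x \<in> P \<Longrightarrow> c' x \<le> s - Q"
    using I(3) cle unfolding c'_def by (auto simp: diff_le_mono)
  define Js where "Js = map (\<lambda>j. {x\<in>P. j \<le> c' x}) [1..<Suc (s - Q)]"
  have Jsid: "set Js \<subseteq> poset_ideals P"
  proof
    fix J assume "J \<in> set Js"
    then obtain j where J: "J = {x\<in>P. j \<le> c' x}" unfolding Js_def by auto
    show "J \<in> poset_ideals P" unfolding poset_ideals_def
    proof (intro CollectI conjI ballI impI)
      show "J \<subseteq> P" using J by auto
      fix x y assume xy: "x \<in> J" "y \<in> P" "y \<le> x"
      have xP: "x \<in> P" and jx: "j \<le> c' x" using xy(1) J by auto
      have "c' x \<le> c' y" using I(4) xP xy(2,3) unfolding c'_def by blast
      thus "y \<in> J" using jx xy(2) J by simp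
    qed
  qed
  have finIs: "\<forall>J\<in>set (Js @ replicate Q I). finite J"
  proof
    fix J assume J: "J \<in> set (Js @ replicate Q I)"
    have "J \<in> set Js \<or> J = I" using J by auto
    hence "J \<subseteq> P" using Jsid IP unfolding poset_ideals_def by blast
    thus "finite J" using finP by (rule finite_subset)
  qed
  have finIs0: "\<forall>J\<in>set Is. finite J" using IsP finP by (auto intro: finite_subset)
  have eqe: "sum_list (map ge Is) = sum_list (map ge (Js @ replicate Q I))"
  proof (rule poly_mapping_eqI)
    fix k :: "'a option"
    show "Poly_Mapping.lookup (sum_list (map ge Is)) k = Poly_Mapping.lookup (sum_list (map ge (Js @ replicate Q I))) k"
    proof (cases k)
      case None
      have "Poly_Mapping.lookup (sum_list (map ge (Js @ replicate Q I))) None = length (Js @ replicate Q I)"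
        by (rule lookup_gpe_None)
      moreover have "length (Js @ replicate Q I) = length Is"
      proof -
        have "length Js = s - Q" unfolding Js_def by (simp only: length_map length_upt)
        thus ?thesis using Qs unfolding s_def by simp
      qed
      ultimately show ?thesis using None by (simp add: lookup_gpe_None)
    next
      case (Some x)
      have lhs: "Poly_Mapping.lookup (sum_list (map ge Is)) k = c x"
        using lookup_gpe_Some[OF finIs0] Some by (simp add: c_def)
      have rhs: "Poly_Mapping.lookup (sum_list (map ge (Js @ replicate Q I))) k
          = length (filter (\<lambda>J. x \<in> J) Js) + (if x \<in> I then Q else 0)"
        using lookup_gpe_Some[OF finIs] Some by simp
      show ?thesis
      proof (cases "x \<in> P")
        case True
        have "filter (\<lambda>J. x \<in> J) Js = map (\<lambda>j. {x\<in>P. j \<le> c' x}) (filter (\<lambda>j. j \<le> c' x) [1..<Suc (s - Q)])"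
          unfolding Js_def filter_map o_def
          by (intro arg_cong[of _ _ "map (\<lambda>j. {x \<in> P. j \<le> c' x})"] filter_cong) (simp_all add: True)
        hence "length (filter (\<lambda>J. x \<in> J) Js) = c' x"
          using count_upt[of "c' x" "s - Q"] c'le[OF True] by simp
        thus ?thesis using lhs rhs I(2) unfolding c'_def by auto
      next
        case False
        have "\<forall>J\<in>set Is. x \<notin> J" using False IsP by blast
        hence "c x = 0" unfolding c_def by (simp add: filter_empty_conv)
        moreover have "filter (\<lambda>J. x \<in> J) Js = []"
          unfolding filter_empty_conv Js_def using False by simp
        ultimately show ?thesis using lhs rhs False IP by auto
      qed
    qed
  qed
  have "(gp Is :: ('a, 'k) mpoly) = gp Js * hibi_gen I ^ Q"
  proof -
    have "(hibi_gen I :: ('a, 'k) mpoly) ^ Q = gp (replicate Q I)" by (simp add: gp_def prod_list_replicate)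
    hence "(gp Js :: ('a, 'k) mpoly) * hibi_gen I ^ Q = gp (Js @ replicate Q I)" by (simp add: gp_append)
    moreover have "(gp Is :: ('a, 'k) mpoly) = gp (Js @ replicate Q I)" by (simp only: gp_single eqe)
    ultimately show ?thesis by simp
  qed
  hence eq: "(Poly_Mapping.single 0 a * gp Is :: ('a, 'k) mpoly) = (Poly_Mapping.single 0 a * gp Js) * hibi_gen I ^ Q"
    by (simp add: mult.assoc)
  have r: "(Poly_Mapping.single 0 a * gp Js :: ('a, 'k) mpoly) \<in> hibi_ring P"
    by (rule hibi_ring.mult[OF hibi_ring.const gp_ring[OF Jsid]])
  have "(hibi_gen I :: ('a, 'k) mpoly) ^ Q \<in> {x ^ Q | x. x \<in> hibi_max P}" using gen_max[OF I(1)] by blast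
  hence "(Poly_Mapping.single 0 a * gp Js) * hibi_gen I ^ Q \<in> ideal_span (hibi_ring P) {x ^ Q | x. x \<in> hibi_max P}"
    by (rule ideal_span.smult[OF r])
  thus ?thesis using eq unfolding frob_pow_def by simp
qed




lemma spanR_frob:
  fixes P :: "'a::order set"
  assumes finP: "finite P" and Q: "1 \<le> Q" and bnd: "(rank_star P + 2) * (Q - 1) + 1 \<le> s"
  shows "f \<in> spanR P s \<Longrightarrow> (f :: ('a, 'k::field) mpoly) \<in> frob_pow (hibi_ring P) (hibi_max P) Q"
proof (induction f rule: spanR.induct)
  case z thus ?case unfolding frob_pow_def by (rule ideal_span.zero)
next
  case (t Is a)
  thus ?case using key_term[OF finP t(1) Q] bnd by simp
next
  case (a f g) thus ?case unfolding frob_pow_def by (blast intro: ideal_span.add)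
qed

lemma ideal_span_mult:
  assumes "r \<in> hibi_ring P"
  shows "y \<in> ideal_span (hibi_ring P) T \<Longrightarrow> r * y \<in> ideal_span (hibi_ring P) T"
proof (induction y rule: ideal_span.induct)
  case zero thus ?case by (simp add: ideal_span.zero)
next
  case (smult r' t)
  have "r * r' \<in> hibi_ring P" using assms smult(1) by (rule hibi_ring.mult)
  hence "(r * r') * t \<in> ideal_span (hibi_ring P) T" using smult(2) by (rule ideal_span.smult)
  thus ?case by (simp add: mult.assoc)
next
  case (add a b) thus ?case by (simp add: distrib_left ideal_span.add)
qed

lemma ideal_span_sub:
  assumes "S \<subseteq> ideal_span (hibi_ring P) T"
  shows "y \<in> ideal_span (hibi_ring P) S \<Longrightarrow> y \<in> ideal_span (hibi_ring P) T"
proof (induction y rule: ideal_span.induct)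
  case zero thus ?case by (rule ideal_span.zero)
next
  case (smult r s)
  thus ?case using ideal_span_mult assms by blast
next
  case (add a b) thus ?case by (blast intro: ideal_span.add)
qed

theorem lemma2p7:
  fixes P :: "'a::order set" and p :: nat
  assumes "finite P" and "P \<noteq> {}"
    and "CHAR('k::field) = p" and "p > 0"
  shows "\<exists>e0. \<forall>e\<ge>e0. \<forall>r::nat. r \<ge> (rank_star P + 2) * (p ^ e - 1) + 1 \<longrightarrow>
           ideal_pow (hibi_ring P :: ('a, 'k) mpoly set) (hibi_max P) r
             \<subseteq> frob_pow (hibi_ring P) (hibi_max P) (p ^ e)"
proof (intro exI allI impI)
  fix e r :: nat
  assume r: "(rank_star P + 2) * (p ^ e - 1) + 1 \<le> r"
  have Q: "1 \<le> p ^ e" using assms(4) by simp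
  have "{prod_list xs | xs. length xs = r \<and> set xs \<subseteq> hibi_max P}
        \<subseteq> frob_pow (hibi_ring P :: ('a, 'k) mpoly set) (hibi_max P) (p ^ e)"
  proof
    fix y :: "('a, 'k) mpoly"
    assume "y \<in> {prod_list xs | xs. length xs = r \<and> set xs \<subseteq> hibi_max P}"
    then obtain xs where xs: "y = prod_list xs" "length xs = r" "set xs \<subseteq> hibi_max P" by blast
    have "prod_list xs \<in> spanR P r" using prod_spanR[OF xs(3)] xs(2) by simp
    thus "y \<in> frob_pow (hibi_ring P) (hibi_max P) (p ^ e)"
      using spanR_frob[OF assms(1) Q r] xs(1) by simp
  qed
  thus "ideal_pow (hibi_ring P :: ('a, 'k) mpoly set) (hibi_max P) r
             \<subseteq> frob_pow (hibi_ring P) (hibi_max P) (p ^ e)"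
    unfolding ideal_pow_def using ideal_span_sub[of _ P "{x ^ p ^ e |x. x \<in> hibi_max P}"]
    unfolding frob_pow_def by blast
qed


end
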